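(* For every integer $i\ge 1$, the sequence $\{\sqrt[n]{d_i(i+n)}\}_{n\ge 1}$ is strictly log-convex; that is, for all integers $i\ge 1$ and $n\ge 1$, $$\frac{\sqrt[n+1]{d_i(i+n+1)}}{\sqrt[n]{d_i(i+n)}}<\frac{\sqrt[n+2]{d_i(i+n+2)}}{\sqrt[n+1]{d_i(i+n+1)}}.$$
   Context: For integers $m\ge 0$ and $0\le i\le m$, the Boros–Moll numbers are $$d_i(m)=2^{-2m}\sum_{k=i}^{m}2^k\binom{2m-2k}{m-k}\binom{m+k}{k}\binom{k}{i}.$$ *)

theory Defs
  imports Complex_Main
begin

definition boros_moll :: "nat \<Rightarrow> nat \<Rightarrow> real" where
  "boros_moll i m = (1 / 2 ^ (2 * m)) *
     (\<Sum>k = i..m. 2 ^ k * real ((2 * m - 2 * k) choose (m - k))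
                  * real ((m + k) choose k) * real (k choose i))"

end

theory Submission
  imports Defs
begin

definition W :: "nat \<Rightarrow> nat \<Rightarrow> nat \<Rightarrow> real" where
  "W i j l = 2^l * fact (2*j) * fact (2*i+2*l+j) / (fact j ^ 2 * fact (i+l+j) * fact i * fact l * 2^(i + 2*(l+j)))"

definition al :: "real \<Rightarrow> real \<Rightarrow> real \<Rightarrow> real" where
  "al i j l = ((2*j+1)*(2*i+2*l+j+1)) / (2*(j+1)*(i+l+j+1))"
definition be :: "real \<Rightarrow> real \<Rightarrow> real \<Rightarrow> real" where
  "be i j l = ((2*i+2*l+j+1)*(2*i+2*l+j+2)) / (2*(i+l+j+1)*(l+1))"

lemma W_pos: "W i j l > 0"
  unfolding W_def by (intro divide_pos_pos mult_pos_pos) auto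

lemma W_Suc_j: "W i (Suc j) l = W i j l * al i j l"
proof -
  have e1: "2 * Suc j = Suc (Suc (2*j))" by simp
  have e2: "2*i+2*l+Suc j = Suc (2*i+2*l+j)" by simp
  have e3: "i+l+Suc j = Suc (i+l+j)" by simp
  have e4: "i + 2*(l + Suc j) = Suc (Suc (i+2*(l+j)))" by simp
  have p: "(fact j :: real) > 0" "(fact (i+l+j) :: real) > 0" "(fact i :: real) > 0" "(fact l :: real) > 0" by auto
  show ?thesis unfolding W_def al_def e1 e2 e3 e4 fact_Suc power_Suc
    apply (simp only: of_nat_mult of_nat_Suc)
    apply (simp add: divide_simps p[THEN less_imp_neq, symmetric] )
    apply (simp add: algebra_simps power2_eq_square)
    done
qed

lemma W_Suc_l: "W i j (Suc l) = W i j l * be i j l"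
proof -
  have e2: "2*i+2*Suc l+j = Suc (Suc (2*i+2*l+j))" by simp
  have e3: "i+Suc l+j = Suc (i+l+j)" by simp
  have e4: "i + 2*(Suc l + j) = Suc (Suc (i+2*(l+j)))" by simp
  have p: "(fact j :: real) > 0" "(fact (i+l+j) :: real) > 0" "(fact i :: real) > 0" "(fact l :: real) > 0" by auto
  show ?thesis unfolding W_def be_def e2 e3 e4 fact_Suc power_Suc
    apply (simp only: of_nat_mult of_nat_Suc)
    apply (simp add: divide_simps p[THEN less_imp_neq, symmetric] )
    apply (simp add: algebra_simps power2_eq_square)
    done
qed

definition pc :: "real \<Rightarrow> real \<Rightarrow> real \<Rightarrow> real" where
  "pc i n l = ((64)*i^0*n^0 + (384)*i^0*n^1 + (912)*i^0*n^2 + (1104)*i^0*n^3 + (720)*i^0*n^4 + (240)*i^0*n^5 + (32)*i^0*n^6 + (208)*i^1*n^0 + (1080)*i^1*n^1 + (2088)*i^1*n^2 + (1888)*i^1*n^3 + (800)*i^1*n^4 + (128)*i^1*n^5 + (360)*i^2*n^0 + (1504)*i^2*n^1 + (2096)*i^2*n^2 + (1168)*i^2*n^3 + (224)*i^2*n^4 + (296)*i^3*n^0 + (944)*i^3*n^1 + (800)*i^3*n^2 + (192)*i^3*n^3 + (80)*i^4*n^0 + (192)*i^4*n^1 + (64)*i^4*n^2)*l^1 + ((-240)*i^0*n^0 + (-1064)*i^0*n^1 + (-1816)*i^0*n^2 + (-1504)*i^0*n^3 + (-608)*i^0*n^4 + (-96)*i^0*n^5 + (-584)*i^1*n^0 +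 (-2080)*i^1*n^1 + (-2704)*i^1*n^2 + (-1536)*i^1*n^3 + (-320)*i^1*n^4 + (-840)*i^2*n^0 + (-2080)*i^2*n^1 + (-1728)*i^2*n^2 + (-480)*i^2*n^3 + (-688)*i^3*n^0 + (-992)*i^3*n^1 + (-384)*i^3*n^2 + (-192)*i^4*n^0 + (-128)*i^4*n^1)*l^2 + ((288)*i^0*n^0 + (912)*i^0*n^1 + (1056)*i^0*n^2 + (528)*i^0*n^3 + (96)*i^0*n^4 + (432)*i^1*n^0 + (1136)*i^1*n^1 + (960)*i^1*n^2 + (256)*i^1*n^3 + (272)*i^2*n^0 + (624)*i^2*n^1 + (288)*i^2*n^2 + (192)*i^3*n^0 + (192)*i^3*n^1 + (64)*i^4*n^0)*l^3 + ((-128)*i^0*n^0 + (-256)*i^0*n^1 + (-160)*i^0*n^2 + (-32)*i^0*n^3 + (-192)*i^1*n^0 + (-224)*i^1*n^1 + (-64)*i^1*n^2 + (-64)*i^2*n^0 + (-32)*i^2*n^1)*l^4"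

definition Dc :: "real \<Rightarrow> real \<Rightarrow> real \<Rightarrow> real" where
  "Dc i n l = (2*n+1-2*l)*(2*n+3-2*l)*(2*i+n+1+l)*(2*i+n+2+l)"

definition cc2 :: "real \<Rightarrow> real \<Rightarrow> real" where "cc2 i n = 4*(n+2)*(i+n+1)*(i+n+2)"
definition cc1 :: "real \<Rightarrow> real \<Rightarrow> real" where "cc1 i n = -2*(i+n+1)*(8*(i+n)^2+24*(i+n)+19-4*i^2)"
definition cc0 :: "real \<Rightarrow> real \<Rightarrow> real" where "cc0 i n = (2*i+n+1)*(4*(i+n)+3)*(4*(i+n)+5)"

lemma abs_id:
  fixes c2 c1 c0 an ad an' ad' bn' bd' p1 D1 p0 D0 :: real
  assumes nz: "ad \<noteq> 0" "ad' \<noteq> 0" "bd' \<noteq> 0" "D1 \<noteq> 0" "D0 \<noteq> 0"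
   and poly: "c2*an*an'*bd'*D1*D0 + c1*an*ad'*bd'*D1*D0 + c0*ad*ad'*bd'*D1*D0 = p1*D0*an*bn'*ad' - p0*D1*an*an'*bd'"
  shows "c2*((an/ad)*(an'/ad')) + c1*(an/ad) + c0 = p1/D1*((an/ad)*(bn'/bd')) - p0/D0*((an/ad)*(an'/ad'))"
proof -
  have L: "c2*((an/ad)*(an'/ad')) + c1*(an/ad) + c0 = (c2*an*an'*bd'*D1*D0 + c1*an*ad'*bd'*D1*D0 + c0*ad*ad'*bd'*D1*D0)/(ad*ad'*bd'*D1*D0)"
    using nz by (simp add: divide_simps) algebra
  have R: "p1/D1*((an/ad)*(bn'/bd')) - p0/D0*((an/ad)*(an'/ad')) = (p1*D0*an*bn'*ad' - p0*D1*an*an'*bd')/(ad*ad'*bd'*D1*D0)"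
    using nz by (simp add: divide_simps)
  show ?thesis unfolding L R poly ..
qed

lemma poly_generic:
  fixes i j l :: real
  shows "cc2 i (j+l)*((2*j+1)*(2*i+2*l+j+1))*((2*(j+1)+1)*(2*i+2*l+(j+1)+1))*(2*(i+l+(j+1)+1)*(l+1))*Dc i (j+l) (l+1)*Dc i (j+l) l
   + cc1 i (j+l)*((2*j+1)*(2*i+2*l+j+1))*(2*((j+1)+1)*(i+l+(j+1)+1))*(2*(i+l+(j+1)+1)*(l+1))*Dc i (j+l) (l+1)*Dc i (j+l) l
   + cc0 i (j+l)*(2*(j+1)*(i+l+j+1))*(2*((j+1)+1)*(i+l+(j+1)+1))*(2*(i+l+(j+1)+1)*(l+1))*Dc i (j+l) (l+1)*Dc i (j+l) l
   = pc i (j+l) (l+1)*Dc i (j+l) l*((2*j+1)*(2*i+2*l+j+1))*((2*i+2*l+(j+1)+1)*(2*i+2*l+(j+1)+2))*(2*((j+1)+1)*(i+l+(j+1)+1))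
     - pc i (j+l) l*Dc i (j+l) (l+1)*((2*j+1)*(2*i+2*l+j+1))*((2*(j+1)+1)*(2*i+2*l+(j+1)+1))*(2*(i+l+(j+1)+1)*(l+1))"
  unfolding pc_def Dc_def cc2_def cc1_def cc0_def by algebra

lemma poly_b1:
  fixes i n :: real
  shows "cc2 i n * ((2*0+1)*(2*i+2*(n+1)+0+1)) * (2*(i+(n+1)+0+1)*((n+1)+1)) * Dc i n (n+2) * Dc i n (n+1)
     + cc1 i n * (2*(0+1)*(i+(n+1)+0+1)) * (2*(i+(n+1)+0+1)*((n+1)+1)) * Dc i n (n+2) * Dc i n (n+1)
     = pc i n (n+2) * Dc i n (n+1) * ((2*i+2*(n+1)+0+1)*(2*i+2*(n+1)+0+2)) * (2*(0+1)*(i+(n+1)+0+1))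
       - pc i n (n+1) * Dc i n (n+2) * ((2*0+1)*(2*i+2*(n+1)+0+1)) * (2*(i+(n+1)+0+1)*((n+1)+1))"
  unfolding pc_def Dc_def cc2_def cc1_def cc0_def by algebra

lemma poly_b2:
  fixes i n :: real
  shows "cc2 i n * Dc i n (n+2) = - pc i n (n+2)"
  unfolding pc_def Dc_def cc2_def by algebra

lemma odd_nz: "2 * real a + 1 - 2 * real b \<noteq> 0" "2 * real a + 3 - 2 * real b \<noteq> 0"
proof -
  show "2 * real a + 1 - 2 * real b \<noteq> 0"
  proof
    assume "2 * real a + 1 - 2 * real b = 0"
    then have "real (2*a+1) = real (2*b)" by simp
    then have "2*a+1 = 2*b" by (simp only: of_nat_eq_iff)
    then show False by presburger
  qed
  show "2 * real a + 3 - 2 * real b \<noteq> 0"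
  proof
    assume "2 * real a + 3 - 2 * real b = 0"
    then have "real (2*a+3) = real (2*b)" by simp
    then have "2*a+3 = 2*b" by (simp only: of_nat_eq_iff)
    then show False by presburger
  qed
qed

lemma Dc_nz: "Dc (real i) (real n) (real l) \<noteq> 0"
  unfolding Dc_def using odd_nz[of n l] by (simp add: add_pos_nonneg)

definition aa :: "nat \<Rightarrow> nat \<Rightarrow> real" where "aa i n = (\<Sum>l\<le>n. W i (n-l) l)"

definition G :: "nat \<Rightarrow> nat \<Rightarrow> nat \<Rightarrow> real" where
  "G i n l = (if l \<le> n+2 then pc i n l / Dc i n l * W i (n+2-l) l else 0)"

definition Cb :: "nat \<Rightarrow> nat \<Rightarrow> real" where "Cb i n = cc2 i n"
definition Ca :: "nat \<Rightarrow> nat \<Rightarrow> real" where "Ca i n = cc1 i n"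
definition C0 :: "nat \<Rightarrow> nat \<Rightarrow> real" where "C0 i n = cc0 i n"

lemma step_generic:
  assumes "l \<le> n"
  shows "cc2 i n * W i (n+2-l) l + cc1 i n * W i (n+1-l) l + cc0 i n * W i (n-l) l = G i n (l+1) - G i n l"
proof -
  obtain j where nj: "n = j + l" using assms le_iff_add by (metis add.commute)
  have e1: "n+2-l = Suc (Suc j)" "n+1-l = Suc j" "n-l = j" "n+2-(l+1) = Suc j" using nj by auto
  have G1: "G i n (l+1) = pc i n (l+1) / Dc i n (l+1) * W i (Suc j) (Suc l)" unfolding G_def using nj e1 by simp
  have G0: "G i n l = pc i n l / Dc i n l * W i (Suc (Suc j)) l" unfolding G_def using nj e1 by simp
  define w where "w = W i j l"
  have ws: "W i (Suc (Suc j)) l = w * (al i j l * al i (j+1) l)" "W i (Suc j) l = w * al i j l"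
     "W i (Suc j) (Suc l) = w * (al i j l * be i (j+1) l)"
    unfolding w_def W_Suc_j W_Suc_l by (simp_all add: mult.assoc)
  have rat: "cc2 i n * (al i j l * al i (j+1) l) + cc1 i n * al i j l + cc0 i n
     = pc i n (l+1) / Dc i n (l+1) * (al i j l * be i (j+1) l) - pc i n l / Dc i n l * (al i j l * al i (j+1) l)"
    unfolding al_def be_def nj of_nat_add of_nat_1
    apply (rule abs_id)
    apply (simp add: add_pos_nonneg)
    apply (simp add: add_pos_nonneg)
    apply (simp add: add_pos_nonneg)
    apply (metis Dc_nz of_nat_add of_nat_1)
    apply (metis Dc_nz of_nat_add)
    by (rule poly_generic)
  have rw: "w * (cc2 i n * (al i j l * al i (j+1) l) + cc1 i n * al i j l + cc0 i n)
     = w * (pc i n (l+1) / Dc i n (l+1) * (al i j l * be i (j+1) l) - pc i n l / Dc i n l * (al i j l * al i (j+1) l))"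
    using rat by simp
  show ?thesis unfolding e1 G1 G0 ws w_def[symmetric]
    using rw by (simp add: algebra_simps)
qed

lemma abs_id2:
  fixes c2 c1 an ad bn bd p2 D2 p1 D1 :: real
  assumes nz: "ad \<noteq> 0" "bd \<noteq> 0" "D2 \<noteq> 0" "D1 \<noteq> 0"
   and poly: "c2*an*bd*D2*D1 + c1*ad*bd*D2*D1 = p2*D1*bn*ad - p1*D2*an*bd"
  shows "c2*(an/ad) + c1 = p2/D2*(bn/bd) - p1/D1*(an/ad)"
proof -
  have L: "c2*(an/ad) + c1 = (c2*an*bd*D2*D1 + c1*ad*bd*D2*D1)/(ad*bd*D2*D1)"
    using nz by (simp add: divide_simps) algebra
  have R: "p2/D2*(bn/bd) - p1/D1*(an/ad) = (p2*D1*bn*ad - p1*D2*an*bd)/(ad*bd*D2*D1)"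
    using nz by (simp add: divide_simps)
  show ?thesis unfolding L R poly ..
qed

lemma step_b1:
  "cc2 i n * W i 1 (n+1) + cc1 i n * W i 0 (n+1) = G i n (n+2) - G i n (n+1)"
proof -
  have G1: "G i n (n+2) = pc i n (n+2) / Dc i n (n+2) * W i 0 (Suc (n+1))" unfolding G_def by simp
  have G0: "G i n (n+1) = pc i n (n+1) / Dc i n (n+1) * W i (Suc 0) (n+1)" unfolding G_def by simp
  define w where "w = W i 0 (n+1)"
  have ws: "W i (Suc 0) (n+1) = w * al i 0 (n+1)" "W i 0 (Suc (n+1)) = w * be i 0 (n+1)"
    unfolding w_def W_Suc_j W_Suc_l by simp_all
  have rat: "cc2 i n * al i 0 (n+1) + cc1 i n = pc i n (n+2) / Dc i n (n+2) * be i 0 (n+1) - pc i n (n+1) / Dc i n (n+1) * al i 0 (n+1)"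
    unfolding al_def be_def of_nat_add of_nat_1 of_nat_0 of_nat_numeral
    apply (rule abs_id2)
    apply (simp add: add_pos_nonneg)
    apply (simp add: add_pos_nonneg)
    apply (metis Dc_nz of_nat_add of_nat_1 numeral_2_eq_2 one_add_one of_nat_numeral)
    apply (metis Dc_nz of_nat_add of_nat_1)
    by (rule poly_b1)
  have rw: "w * (cc2 i n * al i 0 (n+1) + cc1 i n) = w * (pc i n (n+2) / Dc i n (n+2) * be i 0 (n+1) - pc i n (n+1) / Dc i n (n+1) * al i 0 (n+1))"
    using rat by simp
  have e: "W i 1 (n+1) = W i (Suc 0) (n+1)" by simp
  show ?thesis unfolding G1 G0 e ws w_def[symmetric]
    using rw by (simp add: algebra_simps)
qed

lemma step_b2:
  "cc2 i n * W i 0 (n+2) = G i n (n+3) - G i n (n+2)"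
proof -
  have nz: "Dc i n (n+2) \<noteq> 0" by (metis Dc_nz of_nat_add of_nat_numeral)
  have h: "cc2 i n * Dc i n (n+2) = - pc i n (n+2)" by (metis poly_b2 of_nat_add of_nat_numeral)
  have q: "pc i n (n+2) / Dc i n (n+2) = - cc2 i n" using nz h by (simp add: field_simps)
  show ?thesis unfolding G_def using q by simp
qed

lemma aa_rec: "cc2 i n * aa i (n+2) + cc1 i n * aa i (n+1) + cc0 i n * aa i n = 0"
proof -
  define F where "F l = cc2 i n * W i (n+2-l) l + cc1 i n * (if l \<le> n+1 then W i (n+1-l) l else 0)
      + cc0 i n * (if l \<le> n then W i (n-l) l else 0)" for l
  have FG: "F l = G i n (l+1) - G i n l" if "l < n+3" for l
  proof -
    have "l \<le> n \<or> l = n+1 \<or> l = n+2" using that by linarith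
    then consider "l \<le> n" | "l = n+1" | "l = n+2" by blast
    then show ?thesis
    proof cases
      case 1 then show ?thesis unfolding F_def using step_generic[OF 1, of i] by simp
    next
      case 2 then show ?thesis unfolding F_def using step_b1[of i n] by simp
    next
      case 3 then show ?thesis unfolding F_def using step_b2[of i n] by (simp add: numeral_3_eq_3)
    qed
  qed
  have "(\<Sum>l<n+3. F l) = (\<Sum>l<n+3. G i n (Suc l) - G i n l)" using FG by (intro sum.cong) auto
  also have "\<dots> = G i n (n+3) - G i n 0" by (rule sum_lessThan_telescope)
  also have "\<dots> = 0" unfolding G_def by (simp add: pc_def)
  finally have S0: "(\<Sum>l<n+3. F l) = 0" .
  have lt: "{..<n+3} = {..Suc (Suc n)}" by auto
  have s1: "(\<Sum>l\<le>Suc (Suc n). (if l \<le> n+1 then W i (n+1-l) l else 0)) = aa i (n+1)"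
    unfolding aa_def by (simp add: sum.atMost_Suc)
  have s0: "(\<Sum>l\<le>Suc (Suc n). (if l \<le> n then W i (n-l) l else 0)) = aa i n"
    unfolding aa_def by (simp add: sum.atMost_Suc)
  have s2: "(\<Sum>l\<le>Suc (Suc n). W i (n+2-l) l) = aa i (n+2)"
    unfolding aa_def by simp
  have "(\<Sum>l<n+3. F l) = cc2 i n * aa i (n+2) + cc1 i n * aa i (n+1) + cc0 i n * aa i n"
    unfolding F_def lt sum.distrib sum_distrib_left[symmetric] s0 s1 s2 ..
  then show ?thesis using S0 by simp
qed

definition LNf :: "real \<Rightarrow> real \<Rightarrow> real" where "LNf i n = 4*(n+i+1)*(n+i+i^2)-(n+i)"
definition LDf :: "real \<Rightarrow> real \<Rightarrow> real" where "LDf i n = 2*(n+1)*(n+i+i^2)"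
definition pp :: "real \<Rightarrow> real \<Rightarrow> real" where "pp i n = 2*(i+n+1)*(8*(i+n)^2+24*(i+n)+19-4*i^2)"

lemma ind_id: fixes a n :: real
  shows "pp (a+1) n * LNf (a+1) n * LDf (a+1) (n+1) - cc0 (a+1) n * LDf (a+1) n * LDf (a+1) (n+1)
     - LNf (a+1) (n+1) * cc2 (a+1) n * LNf (a+1) n = 288 + a * (960 + a * (1208 + a * (704 + a * (184 + a * (16))))) + n * (672 + a * (2080 + a * (2380 + a * (1232 + a * (284 + a * (24))))) + n * (552 + a * (1536 + a * (1504 + a * (616 + a * (104 + a * (8))))) + n * (192 + a * (464 + a * (356 + a * (88 + a * (4)))) + n * (24 + a * (48 + a * (24))))))"
  unfolding pp_def LNf_def LDf_def cc0_def cc2_def by algebra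

lemma HK_id: fixes a n t :: real
  shows "(LNf (a+1) n + t)^4*(pp (a+1) (n+1) * pp (a+1) n - cc0 (a+1) (n+1) * cc2 (a+1) n)*cc2 (a+1) n^2
    - (LNf (a+1) n + t)^3*LDf (a+1) n*pp (a+1) (n+1)*cc0 (a+1) n*cc2 (a+1) n^2
    - (pp (a+1) n*(LNf (a+1) n + t) - cc0 (a+1) n*LDf (a+1) n)^3*cc2 (a+1) (n+1)*LDf (a+1) n
    = 64*(a+1+n+2)*(4589405568 + a * (56170838016 + a * (323239847616 + a * (1163239353408 + a * (2937075902616 + a * (5533211040144 + a * (8074385656008 + a * (9351454730960 + a * (8736546238736 + a * (6654903977840 + a * (4160386171624 + a * (2141321206096 + a * (907425437992 + a * (315648097440 + a * (89548177152 + a * (20500507584 + a * (3726594560 + a * (525006848 + a * (55219712 + a * (4077568 + a * (188416 + a * (4096))))))))))))))))))))) + n * (31604946336 + a * (364485274848 + a * (1971379637352 + a * (6650026959568 + a * (15693224829712 + a * (27543640644560 + a * (37311180092152 + a * (39950415814664 + a * (34344269195352 + a * (23941329812416 + a * (13608662819808 + a * (6319096234360 + a * (2392980607288 + a * (735067143808 + a * (181375424576 + a * (35397833344 + a * (5336213504 + a * (598860288 + a * (47068672 + a * (2310144 + a * (53248)))))))))))))))))))) + n * (101956361040 + a * (1103737848336 + a * (5587530795828 + a * (17587213798300 + a * (38597613219102 + a * (62769192448892 + a * (78460010349610 + a * (77155858108756 + a * (60585231478094 + a * (38328983045464 + a * (19620272416422 + a * (8127464173772 + a * (2713521439664 + a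 * (723878170832 + a * (152056753152 + a * (24579077376 + a * (2948284928 + a * (247002880 + a * (12892160 + a * (315392))))))))))))))))))) + n * (204537117600 + a * (2069738184672 + a * (9760789954338 + a * (28518177185288 + a * (57871675038630 + a * (86652506929724 + a * (99249025129050 + a * (88939433902352 + a * (63231677278414 + a * (35940918748284 + a * (16374991765336 + a * (5967060828120 + a * (1726474088288 + a * (391298432768 + a * (67950640832 + a * (8724600192 + a * (780006144 + a * (43333120 + a * (1125888)))))))))))))))))) + n * (285623025120 + a * (2688829569792 + a * (11749247449299 + a * (31673306167155 + a * (59035579328972 + a * (80784532049908 + a * (84083150345395 + a * (68023676047323 + a * (43321738545064 + a * (21851144338150 + a * (8731714788726 + a * (2749313726568 + a * (673904094280 + a * (125920785360 + a * (17323689024 + a * (1653769792 + a * (97819648 + a * (2699520))))))))))))))))) + n * (294416763786 + a * (2564570648370 + a * (10318976799411 + a * (25486451406586 + a * (43288426592804 + a * (53657209655742 + a * (50244526814073 + a * (36279023323700 + a * (20424860484956 + a * (9000312486706 + a * (3095259235654 + a * (822349115504 + a * (165521091816 + a * (24407013504 + a * (2487124608 + a * (156516352 + a * (4583168)))))))))))))))) + n * (231747988965 + a * (1856350711191 + a * (6827944477644 + a * (15322052356457 + a * (23490313019690 + a * (26090964130802 + a * (21709966421776 + a * (13791968573858 + a * (6749486698912 + a * (2546122932699 + a * (734771735210 + a * (159388827860 + a * (25170291744 + a * (2732993552 + a * (182519808 + a * (5653760))))))))))))))) + n * (142107582101 + a * (1039272902774 + a * (3464101725895 + a * (6991396746258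 + a * (9562344074086 + a * (9389779250780 + a * (6834907700198 + a * (3750504994804 + a * (1560414576871 + a * (490259015994 + a * (114587338678 + a * (19333931648 + a * (2227671696 + a * (156998656 + a * (5109504)))))))))))))) + n * (68610320294 + a * (454246989480 + a * (1357638302448 + a * (2433485657002 + a * (2925789757381 + a * (2496352771536 + a * (1557370252771 + a * (720134962701 + a * (247059848156 + a * (62162648905 + a * (11158055552 + a * (1354002784 + a * (99627008 + a * (3359488))))))))))))) + n * (26170344004 + a * (155274060068 + a * (410646930214 + a * (643243944416 + a * (666850517078 + a * (483100163266 + a * (251167744011 + a * (94522338712 + a * (25569916239 + a * (4850061568 + a * (612161824 + a * (46133248 + a * (1568000)))))))))))) + n * (7860757025 + a * (41282132297 + a * (94964789185 + a * (127233667090 + a * (110780945995 + a * (65970564814 + a * (27444007680 + a * (7973464536 + a * (1583001888 + a * (203829200 + a * (15220736 + a * (493312))))))))))) + n * (1839900781 + a * (8421047300 + a * (16462863758 + a * (18305852608 + a * (12885405358 + a * (6006714624 + a * (1874378584 + a * (384399488 + a * (49006160 + a * (3423744 + a * (93952)))))))))) + n * (329001092 + a * (1286302616 + a * (2066492100 + a * (1822218896 + a * (976154552 + a * (328034528 + a * (68192128 + a * (8196736 + a * (480256 + a * (8192))))))))) + n * (43450640 + a * (141256224 + a * (176779024 + a * (114468736 + a * (41782688 + a * (8541952 + a * (882560 + a * (32768))))))) + n * (3997248 + a * (10398592 + a * (9174976 + a * (3725056 + a * (706432 + a * (49152))))) + n * (228864 + a * (449024 + a * (216320 + a * (32768)))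 + n * (6144 + a * (8192))))))))))))))))) + t * (2213513568 + a * (22009335984 + a * (101929357944 + a * (292147986276 + a * (580758614964 + a * (850373979216 + a * (950610875536 + a * (829643878696 + a * (573162083936 + a * (315850962036 + a * (139201330276 + a * (48962959184 + a * (13648991920 + a * (2976179264 + a * (496848640 + a * (61341696 + a * (5282048 + a * (283648 + a * (7168)))))))))))))))))) + n * (14000320368 + a * (130152696192 + a * (562183168764 + a * (1498754473236 + a * (2762692412196 + a * (3737854510352 + a * (3845190176712 + a * (3073559008436 + a * (1933879756568 + a * (964159973072 + a * (381386292536 + a * (119248342240 + a * (29201507360 + a * (5511590848 + a * (781666048 + a * (80010496 + a * (5527552 + a * (227328 + a * (4096)))))))))))))))))) + n * (41230841616 + a * (356503583016 + a * (1428243378606 + a * (3520553255961 + a * (5978992058341 + a * (7422690485052 + a * (6973336171136 + a * (5062073227061 + a * (2873491458237 + a * (1282288247722 + a * (449679929460 + a * (123205026024 + a * (26061575568 + a * (4174740064 + a * (491751744 + a * (40747904 + a * (2217728 + a * (70656 + a * (1024)))))))))))))))))) + n * (74994051384 + a * (599501367048 + a * (2213311470021 + a * (5009408073132 + a * (7779293963872 + a * (8788857437262 + a * (7472030762845 + a * (4876105742704 + a * (2468604820330 + a * (973081940606 + a * (297912341904 + a * (70234973304 + a * (12557263808 + a * (1662984480 + a * (157605760 + a * (10158208 + a * (408576 + a * (8192))))))))))))))))) + n * (94208885406 + a * (691418456187 + a * (2334653524131 + a * (4812056411448 + a * (6771959037490 + a * (6893733555136 + a * (5245424740712 + a * (3039017644326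 + a * (1352653965990 + a * (463184748512 + a * (121367769660 + a * (24037019632 + a * (3526071264 + a * (371709632 + a * (26911040 + a * (1234944 + a * (28672)))))))))))))))) + n * (86571106635 + a * (578516229186 + a * (1770554560806 + a * (3290694303042 + a * (4151036266866 + a * (3761419010442 + a * (2526513533364 + a * (1279221065494 + a * (491464778004 + a * (143031441308 + a * (31232880896 + a * (5025399024 + a * (578993344 + a * (45691648 + a * (2279424 + a * (57344))))))))))))))) + n * (60108294234 + a * (362111938302 + a * (993545912382 + a * (1644985941226 + a * (1834934997190 + a * (1457482609745 + a * (849120412023 + a * (368077257053 + a * (119107112339 + a * (28590530924 + a * (5008930740 + a * (622642112 + a * (52445504 + a * (2752512 + a * (71680)))))))))))))) + n * (32104748796 + a * (172232819688 + a * (417915258758 + a * (607033273398 + a * (588463714781 + a * (401617464938 + a * (198250785065 + a * (71544513810 + a * (18840128948 + a * (3570022600 + a * (473191360 + a * (41751424 + a * (2236416 + a * (57344))))))))))))) + n * (13296635556 + a * (62544721303 + a * (131886696255 + a * (164748912341 + a * (135634197479 + a * (77407867893 + a * (31335162943 + a * (9040852644 + a * (1839212172 + a * (256403136 + a * (23190848 + a * (1222656 + a * (28672)))))))))))) + n * (4269073581 + a * (17253491542 + a * (30891117447 + a * (32299484724 + a * (21868458669 + a * (10036249160 + a * (3172257404 + a * (686409920 + a * (98767552 + a * (8875520 + a * (436224 + a * (8192))))))))))) + n * (1053513072 + a * (3558305992 + a * (5236525958 + a * (4407637400 + a * (2338831024 + a * (811674520 + a * (184515000 + a * (26635456 + a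 * (2256320 + a * (93184 + a * (1024)))))))))) + n * (196161348 + a * (531879320 + a * (612801720 + a * (390547168 + a * (149874440 + a * (35176320 + a * (4861120 + a * (350976 + a * (9216)))))))) + n * (26663220 + a * (54453488 + a * (45288288 + a * (19558784 + a * (4611072 + a * (557696 + a * (26496)))))) + n * (2496144 + a * (3416576 + a * (1741952 + a * (389632 + a * (32896)))) + n * (143808 + a * (99072 + a * (18432)) + n * (3840))))))))))))))) + t * (401957856 + a * (3098485584 + a * (10965531240 + a * (23639269932 + a * (34724602152 + a * (36824691996 + a * (29131121310 + a * (17508611364 + a * (8062675158 + a * (2845512264 + a * (763681968 + a * (153161712 + a * (22244448 + a * (2212608 + a * (135168 + a * (3840))))))))))))))) + n * (2320713360 + a * (16593617424 + a * (54336029388 + a * (108055592208 + a * (145887913602 + a * (141571138026 + a * (101937106836 + a * (55406433606 + a * (22892555214 + a * (7178833680 + a * (1691202528 + a * (293153568 + a * (36065376 + a * (2958336 + a * (143616 + a * (3072))))))))))))))) + n * (6197397840 + a * (40833372480 + a * (122859951138 + a * (223719437493 + a * (275397287253 + a * (242403703560 + a * (157309780104 + a * (76461097632 + a * (27977454264 + a * (7675202280 + a * (1557244512 + a * (227764464 + a * (22998912 + a * (1489152 + a * (53760 + a * (768))))))))))))))) + n * (10145656536 + a * (61127577396 + a * (167629293585 + a * (277067467410 + a * (308027981868 + a * (243335812164 + a * (140634033534 + a * (60287103768 + a * (19216896276 + a * (4519673184 + a * (769516656 + a * (91648128 + a * (7196352 + a * (333312 + a * (6912)))))))))))))) + n *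 (11374514790 + a * (62101687335 + a * (153725085369 + a * (228239088447 + a * (226544121528 + a * (158562504477 + a * (80410179978 + a * (29872948614 + a * (8118856032 + a * (1592411520 + a * (219001440 + a * (20029536 + a * (1098240 + a * (27648))))))))))))) + n * (9237694341 + a * (45208527210 + a * (99846725013 + a * (131482676724 + a * (114878439381 + a * (70097343936 + a * (30605645238 + a * (9628816656 + a * (2166314400 + a * (340264128 + a * (35530464 + a * (2230272 + a * (64512)))))))))))) + n * (5604112734 + a * (24258173457 + a * (47120489763 + a * (54169209873 + a * (40920686433 + a * (21318212841 + a * (7814092452 + a * (2016249456 + a * (359517216 + a * (42350832 + a * (2987520 + a * (96768))))))))))) + n * (2579724903 + a * (9712731732 + a * (16294448829 + a * (16023324486 + a * (10222383363 + a * (4420369776 + a * (1312773120 + a * (264834912 + a * (34860048 + a * (2721792 + a * (96768)))))))))) + n * (905426169 + a * (2901307026 + a * (4104891474 + a * (3360291171 + a * (1752785952 + a * (604148424 + a * (137696256 + a * (20051184 + a * (1700352 + a * (64512))))))))) + n * (241108170 + a * (638466618 + a * (737368101 + a * (483559584 + a * (196596216 + a * (50667360 + a * (8064912 + a * (721920 + a * (27648)))))))) + n * (47951811 + a * (100590402 + a * (90411348 + a * (44781720 + a * (13108416 + a * (2244096 + a * (202752 + a * (6912))))))) + n * (6906906 + a * (10742400 + a * (6958104 + a * (2345856 + a * (420096 + a * (35328 + a * (768)))))) + n * (681192 + a * (696864 + a * (280896 + a * (50304 + a * (3072)))) + n * (41184 + a * (20736 + a * (3456)) + n * (1152))))))))))))))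 + t * (32281824 + a * (178107456 + a * (441243096 + a * (649566516 + a * (633165608 + a * (430618451 + a * (209535215 + a * (73497492 + a * (18445548 + a * (3231984 + a * (375952 + a * (26176 + a * (832)))))))))))) + n * (168263104 + a * (854032144 + a * (1940300996 + a * (2607819816 + a * (2307272929 + a * (1413758020 + a * (613965828 + a * (189890896 + a * (41359088 + a * (6156224 + a * (590592 + a * (32512 + a * (768)))))))))))) + n * (402186928 + a * (1862701656 + a * (3847441202 + a * (4676091339 + a * (3714322777 + a * (2024196680 + a * (772324632 + a * (206477806 + a * (38015256 + a * (4631928 + a * (346160 + a * (13632 + a * (192)))))))))))) + n * (583585088 + a * (2442774612 + a * (4540024151 + a * (4932290860 + a * (3470381852 + a * (1654940352 + a * (543504542 + a * (122233638 + a * (18305176 + a * (1719176 + a * (89664 + a * (1920))))))))))) + n * (573436478 + a * (2144569426 + a * (3541775084 + a * (3390816125 + a * (2077770723 + a * (848843633 + a * (233330567 + a * (42431436 + a * (4858884 + a * (314176 + a * (8640)))))))))) + n * (402863160 + a * (1327408814 + a * (1918033879 + a * (1589338968 + a * (829618053 + a * (282092232 + a * (62318052 + a * (8602656 + a * (671552 + a * (22528))))))))) + n * (208151550 + a * (593779335 + a * (735999871 + a * (515595094 + a * (222473522 + a * (60381872 + a * (10049872 + a * (937216 + a * (37504)))))))) + n * (80070601 + a * (193348930 + a * (200304330 + a * (114882314 + a * (39231456 + a * (7953976 + a * (885760 + a * (41856))))))) + n * (22927828 + a * (45471523 + a * (37975643 + a * (17018292 + a * (4293172 + a * (575808 + a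 * (32064)))))) + n * (4825835 + a * (7530040 + a * (4803868 + a * (1560896 + a * (256320 + a * (16896))))) + n * (725556 + a * (833208 + a * (371048 + a * (75968 + a * (5952)))) + n * (73768 + a * (55296 + a * (14272 + a * (1280))) + n * (4544 + a * (1664 + a * (128)) + n * (128))))))))))))) + t * (956448 + a * (3211632 + a * (4707096 + a * (3944740 + a * (2079040 + a * (713348 + a * (159184 + a * (22304 + a * (1792 + a * (64))))))))) + n * (4412880 + a * (13530048 + a * (17945108 + a * (13459164 + a * (6259772 + a * (1860748 + a * (350840 + a * (40096 + a * (2496 + a * (64))))))))) + n * (9202896 + a * (25510216 + a * (30244242 + a * (19986245 + a * (8036244 + a * (2012181 + a * (307740 + a * (26888 + a * (1152 + a * (16))))))))) + n * (11448648 + a * (28341928 + a * (29570715 + a * (16868034 + a * (5701291 + a * (1154414 + a * (134250 + a * (7968 + a * (176)))))))) + n * (9437994 + a * (20543431 + a * (18480800 + a * (8848313 + a * (2413622 + a * (370523 + a * (29120 + a * (880))))))) + n * (5412537 + a * (10149230 + a * (7654803 + a * (2953564 + a * (609641 + a * (63072 + a * (2512)))))) + n * (2202936 + a * (3460334 + a * (2100984 + a * (612566 + a * (85056 + a * (4448))))) + n * (636198 + a * (803798 + a * (368396 + a * (72160 + a * (5056)))) + n * (127734 + a * (121719 + a * (37440 + a * (3696))) + n * (16977 + a * (10848 + a * (1680)) + n * (1344 + a * (432) + n * (48))))))))))))))))"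
  unfolding pp_def LNf_def LDf_def cc0_def cc2_def by algebra

lemma ind_nonneg: fixes a n :: nat shows "0 \<le> (let a = real a; n = real n in 288 + a * (960 + a * (1208 + a * (704 + a * (184 + a * (16))))) + n * (672 + a * (2080 + a * (2380 + a * (1232 + a * (284 + a * (24))))) + n * (552 + a * (1536 + a * (1504 + a * (616 + a * (104 + a * (8))))) + n * (192 + a * (464 + a * (356 + a * (88 + a * (4)))) + n * (24 + a * (48 + a * (24)))))))"
  unfolding Let_def by (intro add_nonneg_nonneg mult_nonneg_nonneg; simp)

lemma H3_pos: fixes a n :: nat and t :: real assumes "0 \<le> t" shows "0 < (let a = real a; n = real n in 4589405568 + a * (56170838016 + a * (323239847616 + a * (1163239353408 + a * (2937075902616 + a * (5533211040144 + a * (8074385656008 + a * (9351454730960 + a * (8736546238736 + a * (6654903977840 + a * (4160386171624 + a * (2141321206096 + a * (907425437992 + a * (315648097440 + a * (89548177152 + a * (20500507584 + a * (3726594560 + a * (525006848 + a * (55219712 + a * (4077568 + a * (188416 + a * (4096))))))))))))))))))))) + n * (31604946336 + a * (364485274848 + a * (1971379637352 + a * (6650026959568 + a * (15693224829712 + a * (27543640644560 + a * (37311180092152 + a * (39950415814664 + a * (34344269195352 + a * (23941329812416 + a * (13608662819808 + a * (6319096234360 + a * (2392980607288 + a * (735067143808 + a * (181375424576 + a * (35397833344 + a * (5336213504 + a * (598860288 + a * (47068672 + a * (2310144 + a * (53248)))))))))))))))))))) + n * (101956361040 + a * (1103737848336 + a * (5587530795828 + a * (17587213798300 + a * (38597613219102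 + a * (62769192448892 + a * (78460010349610 + a * (77155858108756 + a * (60585231478094 + a * (38328983045464 + a * (19620272416422 + a * (8127464173772 + a * (2713521439664 + a * (723878170832 + a * (152056753152 + a * (24579077376 + a * (2948284928 + a * (247002880 + a * (12892160 + a * (315392))))))))))))))))))) + n * (204537117600 + a * (2069738184672 + a * (9760789954338 + a * (28518177185288 + a * (57871675038630 + a * (86652506929724 + a * (99249025129050 + a * (88939433902352 + a * (63231677278414 + a * (35940918748284 + a * (16374991765336 + a * (5967060828120 + a * (1726474088288 + a * (391298432768 + a * (67950640832 + a * (8724600192 + a * (780006144 + a * (43333120 + a * (1125888)))))))))))))))))) + n * (285623025120 + a * (2688829569792 + a * (11749247449299 + a * (31673306167155 + a * (59035579328972 + a * (80784532049908 + a * (84083150345395 + a * (68023676047323 + a * (43321738545064 + a * (21851144338150 + a * (8731714788726 + a * (2749313726568 + a * (673904094280 + a * (125920785360 + a * (17323689024 + a * (1653769792 + a * (97819648 + a * (2699520))))))))))))))))) + n * (294416763786 + a * (2564570648370 + a * (10318976799411 + a * (25486451406586 + a * (43288426592804 + a * (53657209655742 + a * (50244526814073 + a * (36279023323700 + a * (20424860484956 + a * (9000312486706 + a * (3095259235654 + a * (822349115504 + a * (165521091816 + a * (24407013504 + a * (2487124608 + a * (156516352 + a * (4583168)))))))))))))))) + n * (231747988965 + a * (1856350711191 + a * (6827944477644 + a * (15322052356457 + a * (23490313019690 + a * (26090964130802 + a * (21709966421776 + a * (13791968573858 + a * (6749486698912 + a * (2546122932699 + a * (734771735210 + a * (159388827860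 + a * (25170291744 + a * (2732993552 + a * (182519808 + a * (5653760))))))))))))))) + n * (142107582101 + a * (1039272902774 + a * (3464101725895 + a * (6991396746258 + a * (9562344074086 + a * (9389779250780 + a * (6834907700198 + a * (3750504994804 + a * (1560414576871 + a * (490259015994 + a * (114587338678 + a * (19333931648 + a * (2227671696 + a * (156998656 + a * (5109504)))))))))))))) + n * (68610320294 + a * (454246989480 + a * (1357638302448 + a * (2433485657002 + a * (2925789757381 + a * (2496352771536 + a * (1557370252771 + a * (720134962701 + a * (247059848156 + a * (62162648905 + a * (11158055552 + a * (1354002784 + a * (99627008 + a * (3359488))))))))))))) + n * (26170344004 + a * (155274060068 + a * (410646930214 + a * (643243944416 + a * (666850517078 + a * (483100163266 + a * (251167744011 + a * (94522338712 + a * (25569916239 + a * (4850061568 + a * (612161824 + a * (46133248 + a * (1568000)))))))))))) + n * (7860757025 + a * (41282132297 + a * (94964789185 + a * (127233667090 + a * (110780945995 + a * (65970564814 + a * (27444007680 + a * (7973464536 + a * (1583001888 + a * (203829200 + a * (15220736 + a * (493312))))))))))) + n * (1839900781 + a * (8421047300 + a * (16462863758 + a * (18305852608 + a * (12885405358 + a * (6006714624 + a * (1874378584 + a * (384399488 + a * (49006160 + a * (3423744 + a * (93952)))))))))) + n * (329001092 + a * (1286302616 + a * (2066492100 + a * (1822218896 + a * (976154552 + a * (328034528 + a * (68192128 + a * (8196736 + a * (480256 + a * (8192))))))))) + n * (43450640 + a * (141256224 + a * (176779024 + a * (114468736 + a * (41782688 + a * (8541952 + a * (882560 + a * (32768)))))))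 + n * (3997248 + a * (10398592 + a * (9174976 + a * (3725056 + a * (706432 + a * (49152))))) + n * (228864 + a * (449024 + a * (216320 + a * (32768))) + n * (6144 + a * (8192))))))))))))))))) + t * (2213513568 + a * (22009335984 + a * (101929357944 + a * (292147986276 + a * (580758614964 + a * (850373979216 + a * (950610875536 + a * (829643878696 + a * (573162083936 + a * (315850962036 + a * (139201330276 + a * (48962959184 + a * (13648991920 + a * (2976179264 + a * (496848640 + a * (61341696 + a * (5282048 + a * (283648 + a * (7168)))))))))))))))))) + n * (14000320368 + a * (130152696192 + a * (562183168764 + a * (1498754473236 + a * (2762692412196 + a * (3737854510352 + a * (3845190176712 + a * (3073559008436 + a * (1933879756568 + a * (964159973072 + a * (381386292536 + a * (119248342240 + a * (29201507360 + a * (5511590848 + a * (781666048 + a * (80010496 + a * (5527552 + a * (227328 + a * (4096)))))))))))))))))) + n * (41230841616 + a * (356503583016 + a * (1428243378606 + a * (3520553255961 + a * (5978992058341 + a * (7422690485052 + a * (6973336171136 + a * (5062073227061 + a * (2873491458237 + a * (1282288247722 + a * (449679929460 + a * (123205026024 + a * (26061575568 + a * (4174740064 + a * (491751744 + a * (40747904 + a * (2217728 + a * (70656 + a * (1024)))))))))))))))))) + n * (74994051384 + a * (599501367048 + a * (2213311470021 + a * (5009408073132 + a * (7779293963872 + a * (8788857437262 + a * (7472030762845 + a * (4876105742704 + a * (2468604820330 + a * (973081940606 + a * (297912341904 + a * (70234973304 + a * (12557263808 + a * (1662984480 + a * (157605760 + a * (10158208 + a * (408576 + a * (8192)))))))))))))))))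 + n * (94208885406 + a * (691418456187 + a * (2334653524131 + a * (4812056411448 + a * (6771959037490 + a * (6893733555136 + a * (5245424740712 + a * (3039017644326 + a * (1352653965990 + a * (463184748512 + a * (121367769660 + a * (24037019632 + a * (3526071264 + a * (371709632 + a * (26911040 + a * (1234944 + a * (28672)))))))))))))))) + n * (86571106635 + a * (578516229186 + a * (1770554560806 + a * (3290694303042 + a * (4151036266866 + a * (3761419010442 + a * (2526513533364 + a * (1279221065494 + a * (491464778004 + a * (143031441308 + a * (31232880896 + a * (5025399024 + a * (578993344 + a * (45691648 + a * (2279424 + a * (57344))))))))))))))) + n * (60108294234 + a * (362111938302 + a * (993545912382 + a * (1644985941226 + a * (1834934997190 + a * (1457482609745 + a * (849120412023 + a * (368077257053 + a * (119107112339 + a * (28590530924 + a * (5008930740 + a * (622642112 + a * (52445504 + a * (2752512 + a * (71680)))))))))))))) + n * (32104748796 + a * (172232819688 + a * (417915258758 + a * (607033273398 + a * (588463714781 + a * (401617464938 + a * (198250785065 + a * (71544513810 + a * (18840128948 + a * (3570022600 + a * (473191360 + a * (41751424 + a * (2236416 + a * (57344))))))))))))) + n * (13296635556 + a * (62544721303 + a * (131886696255 + a * (164748912341 + a * (135634197479 + a * (77407867893 + a * (31335162943 + a * (9040852644 + a * (1839212172 + a * (256403136 + a * (23190848 + a * (1222656 + a * (28672)))))))))))) + n * (4269073581 + a * (17253491542 + a * (30891117447 + a * (32299484724 + a * (21868458669 + a * (10036249160 + a * (3172257404 + a * (686409920 + a * (98767552 + a * (8875520 + a * (436224 + a * (8192)))))))))))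 + n * (1053513072 + a * (3558305992 + a * (5236525958 + a * (4407637400 + a * (2338831024 + a * (811674520 + a * (184515000 + a * (26635456 + a * (2256320 + a * (93184 + a * (1024)))))))))) + n * (196161348 + a * (531879320 + a * (612801720 + a * (390547168 + a * (149874440 + a * (35176320 + a * (4861120 + a * (350976 + a * (9216)))))))) + n * (26663220 + a * (54453488 + a * (45288288 + a * (19558784 + a * (4611072 + a * (557696 + a * (26496)))))) + n * (2496144 + a * (3416576 + a * (1741952 + a * (389632 + a * (32896)))) + n * (143808 + a * (99072 + a * (18432)) + n * (3840))))))))))))))) + t * (401957856 + a * (3098485584 + a * (10965531240 + a * (23639269932 + a * (34724602152 + a * (36824691996 + a * (29131121310 + a * (17508611364 + a * (8062675158 + a * (2845512264 + a * (763681968 + a * (153161712 + a * (22244448 + a * (2212608 + a * (135168 + a * (3840))))))))))))))) + n * (2320713360 + a * (16593617424 + a * (54336029388 + a * (108055592208 + a * (145887913602 + a * (141571138026 + a * (101937106836 + a * (55406433606 + a * (22892555214 + a * (7178833680 + a * (1691202528 + a * (293153568 + a * (36065376 + a * (2958336 + a * (143616 + a * (3072))))))))))))))) + n * (6197397840 + a * (40833372480 + a * (122859951138 + a * (223719437493 + a * (275397287253 + a * (242403703560 + a * (157309780104 + a * (76461097632 + a * (27977454264 + a * (7675202280 + a * (1557244512 + a * (227764464 + a * (22998912 + a * (1489152 + a * (53760 + a * (768))))))))))))))) + n * (10145656536 + a * (61127577396 + a * (167629293585 + a * (277067467410 + a * (308027981868 + a * (243335812164 + a * (140634033534 + a * (60287103768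 + a * (19216896276 + a * (4519673184 + a * (769516656 + a * (91648128 + a * (7196352 + a * (333312 + a * (6912)))))))))))))) + n * (11374514790 + a * (62101687335 + a * (153725085369 + a * (228239088447 + a * (226544121528 + a * (158562504477 + a * (80410179978 + a * (29872948614 + a * (8118856032 + a * (1592411520 + a * (219001440 + a * (20029536 + a * (1098240 + a * (27648))))))))))))) + n * (9237694341 + a * (45208527210 + a * (99846725013 + a * (131482676724 + a * (114878439381 + a * (70097343936 + a * (30605645238 + a * (9628816656 + a * (2166314400 + a * (340264128 + a * (35530464 + a * (2230272 + a * (64512)))))))))))) + n * (5604112734 + a * (24258173457 + a * (47120489763 + a * (54169209873 + a * (40920686433 + a * (21318212841 + a * (7814092452 + a * (2016249456 + a * (359517216 + a * (42350832 + a * (2987520 + a * (96768))))))))))) + n * (2579724903 + a * (9712731732 + a * (16294448829 + a * (16023324486 + a * (10222383363 + a * (4420369776 + a * (1312773120 + a * (264834912 + a * (34860048 + a * (2721792 + a * (96768)))))))))) + n * (905426169 + a * (2901307026 + a * (4104891474 + a * (3360291171 + a * (1752785952 + a * (604148424 + a * (137696256 + a * (20051184 + a * (1700352 + a * (64512))))))))) + n * (241108170 + a * (638466618 + a * (737368101 + a * (483559584 + a * (196596216 + a * (50667360 + a * (8064912 + a * (721920 + a * (27648)))))))) + n * (47951811 + a * (100590402 + a * (90411348 + a * (44781720 + a * (13108416 + a * (2244096 + a * (202752 + a * (6912))))))) + n * (6906906 + a * (10742400 + a * (6958104 + a * (2345856 + a * (420096 + a * (35328 + a * (768)))))) + n *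 (681192 + a * (696864 + a * (280896 + a * (50304 + a * (3072)))) + n * (41184 + a * (20736 + a * (3456)) + n * (1152)))))))))))))) + t * (32281824 + a * (178107456 + a * (441243096 + a * (649566516 + a * (633165608 + a * (430618451 + a * (209535215 + a * (73497492 + a * (18445548 + a * (3231984 + a * (375952 + a * (26176 + a * (832)))))))))))) + n * (168263104 + a * (854032144 + a * (1940300996 + a * (2607819816 + a * (2307272929 + a * (1413758020 + a * (613965828 + a * (189890896 + a * (41359088 + a * (6156224 + a * (590592 + a * (32512 + a * (768)))))))))))) + n * (402186928 + a * (1862701656 + a * (3847441202 + a * (4676091339 + a * (3714322777 + a * (2024196680 + a * (772324632 + a * (206477806 + a * (38015256 + a * (4631928 + a * (346160 + a * (13632 + a * (192)))))))))))) + n * (583585088 + a * (2442774612 + a * (4540024151 + a * (4932290860 + a * (3470381852 + a * (1654940352 + a * (543504542 + a * (122233638 + a * (18305176 + a * (1719176 + a * (89664 + a * (1920))))))))))) + n * (573436478 + a * (2144569426 + a * (3541775084 + a * (3390816125 + a * (2077770723 + a * (848843633 + a * (233330567 + a * (42431436 + a * (4858884 + a * (314176 + a * (8640)))))))))) + n * (402863160 + a * (1327408814 + a * (1918033879 + a * (1589338968 + a * (829618053 + a * (282092232 + a * (62318052 + a * (8602656 + a * (671552 + a * (22528))))))))) + n * (208151550 + a * (593779335 + a * (735999871 + a * (515595094 + a * (222473522 + a * (60381872 + a * (10049872 + a * (937216 + a * (37504)))))))) + n * (80070601 + a * (193348930 + a * (200304330 + a * (114882314 + a * (39231456 + a * (7953976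 + a * (885760 + a * (41856))))))) + n * (22927828 + a * (45471523 + a * (37975643 + a * (17018292 + a * (4293172 + a * (575808 + a * (32064)))))) + n * (4825835 + a * (7530040 + a * (4803868 + a * (1560896 + a * (256320 + a * (16896))))) + n * (725556 + a * (833208 + a * (371048 + a * (75968 + a * (5952)))) + n * (73768 + a * (55296 + a * (14272 + a * (1280))) + n * (4544 + a * (1664 + a * (128)) + n * (128))))))))))))) + t * (956448 + a * (3211632 + a * (4707096 + a * (3944740 + a * (2079040 + a * (713348 + a * (159184 + a * (22304 + a * (1792 + a * (64))))))))) + n * (4412880 + a * (13530048 + a * (17945108 + a * (13459164 + a * (6259772 + a * (1860748 + a * (350840 + a * (40096 + a * (2496 + a * (64))))))))) + n * (9202896 + a * (25510216 + a * (30244242 + a * (19986245 + a * (8036244 + a * (2012181 + a * (307740 + a * (26888 + a * (1152 + a * (16))))))))) + n * (11448648 + a * (28341928 + a * (29570715 + a * (16868034 + a * (5701291 + a * (1154414 + a * (134250 + a * (7968 + a * (176)))))))) + n * (9437994 + a * (20543431 + a * (18480800 + a * (8848313 + a * (2413622 + a * (370523 + a * (29120 + a * (880))))))) + n * (5412537 + a * (10149230 + a * (7654803 + a * (2953564 + a * (609641 + a * (63072 + a * (2512)))))) + n * (2202936 + a * (3460334 + a * (2100984 + a * (612566 + a * (85056 + a * (4448))))) + n * (636198 + a * (803798 + a * (368396 + a * (72160 + a * (5056)))) + n * (127734 + a * (121719 + a * (37440 + a * (3696))) + n * (16977 + a * (10848 + a * (1680)) + n * (1344 + a * (432) + n * 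(48))))))))))))))))"
  unfolding Let_def using assms by (intro add_pos_nonneg add_nonneg_nonneg mult_nonneg_nonneg; simp)




lemma aa_pos: "aa i n > 0"
  unfolding aa_def by (rule sum_pos) (auto intro: W_pos)

lemma fact_ineq: "fact i * fact i * 2^i \<le> (fact (2*i) :: nat)"
proof (induction i)
  case 0 then show ?case by simp
next
  case (Suc i)
  have e: "2 * Suc i = Suc (Suc (2*i))" by simp
  have "fact (Suc i) * fact (Suc i) * 2 ^ Suc i = (2*(Suc i)*(Suc i)) * (fact i * fact i * 2^i :: nat)"
    by (simp add: algebra_simps)
  also have "\<dots> \<le> (2*(Suc i)*(Suc i)) * fact (2*i)" using Suc by (intro mult_left_mono) auto
  also have "\<dots> \<le> (Suc (Suc (2*i)) * Suc (2*i)) * fact (2*i)" by (intro mult_right_mono) auto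
  also have "\<dots> = fact (2 * Suc i)" unfolding e by (simp add: algebra_simps)
  finally show ?case .
qed

lemma aa0_ge1: "aa i 0 \<ge> 1"
proof -
  have "aa i 0 = fact (2*i) / (fact i * fact i * 2^i)" unfolding aa_def W_def by (simp add: power2_eq_square)
  moreover have "real (fact i * fact i * 2^i) \<le> real (fact (2*i))" using fact_ineq[of i] by linarith
  ultimately show ?thesis by (simp add: of_nat_fact)
qed

lemma bm_aa: "boros_moll i (i+n) = aa i n"
proof -
  have "boros_moll i (i+n) = (1 / 2 ^ (2 * (i+n))) * (\<Sum>l = 0..n. 2 ^ (l+i) * real ((2 * (i+n) - 2 * (l+i)) choose ((i+n) - (l+i)))
                  * real ((i+n) + (l+i) choose (l+i)) * real ((l+i) choose i))"
  proof -
    have s: "(\<Sum>k = i..i+n. g k) = (\<Sum>l = 0..n. g (l+i))" for g :: "nat \<Rightarrow> real"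
      using sum.shift_bounds_cl_nat_ivl[of g 0 i n] by (simp add: add.commute)
    show ?thesis unfolding boros_moll_def s ..
  qed
  also have "\<dots> = (\<Sum>l\<le>n. W i (n-l) l)"
    unfolding sum_distrib_left atLeast0AtMost
  proof (rule sum.cong[OF refl])
    fix l assume "l \<in> {..n}"
    then obtain j where nj: "n = l + j" using le_iff_add by auto
    have e: "2 * (i+n) - 2 * (l+i) = 2*j" "(i+n) - (l+i) = j" "(i+n) + (l+i) = 2*i+2*l+j" "n - l = j" using nj by auto
    have b1: "real ((2*j) choose j) = fact (2*j) / (fact j * fact j)" by (simp add: binomial_fact mult_2)
    have b2: "real ((2*i+2*l+j) choose (l+i)) = fact (2*i+2*l+j) / (fact (l+i) * fact (i+l+j))"
      by (subst binomial_fact) (auto simp: algebra_simps)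
    have b3: "real ((l+i) choose i) = fact (l+i) / (fact i * fact l)"
      by (subst binomial_fact) auto
    have p: "(fact (l+i) :: real) \<noteq> 0" by simp
    have h: "(2::real)^(i*2) = 2^i * 2^i" by (simp add: power_add[symmetric] mult_2_right)
    show "1 / 2 ^ (2 * (i + n)) * (2 ^ (l + i) * real (2 * (i + n) - 2 * (l + i) choose (i + n - (l + i))) *
          real (i + n + (l + i) choose (l + i)) * real (l + i choose i)) = W i (n - l) l"
      unfolding e b1 b2 b3 W_def using p nj
      by (simp add: field_simps power_add power2_eq_square mult_2 add.commute add.left_commute h)
  qed
  finally show ?thesis unfolding aa_def .
qed

definition rr :: "nat \<Rightarrow> nat \<Rightarrow> real" where "rr i n = aa i (n+1) / aa i n"

lemma rr_pos: "rr i n > 0" unfolding rr_def using aa_pos by simp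

lemma cc2_pos: "cc2 (real i) (real n) > 0" unfolding cc2_def by (simp add: add_pos_nonneg)

lemma rr_rec: "rr i (n+1) = pp i n / cc2 i n - (cc0 i n / cc2 i n) / rr i n"
proof -
  have r: "cc2 i n * aa i (n+2) + cc1 i n * aa i (n+1) + cc0 i n * aa i n = 0" by (rule aa_rec)
  have c1: "cc1 i n = - pp i n" unfolding cc1_def pp_def by (simp add: algebra_simps)
  have a2: "aa i (n+2) = (pp i n * aa i (n+1) - cc0 i n * aa i n) / cc2 i n"
    using r c1 cc2_pos[of i n] by (simp add: field_simps)
  have "rr i (n+1) = aa i (n+2) / aa i (n+1)" unfolding rr_def by (simp add: numeral_2_eq_2)
  also have "\<dots> = pp i n / cc2 i n - (cc0 i n / cc2 i n) / rr i n"
    unfolding a2 rr_def using aa_pos[of i n] aa_pos[of i "n+1"] cc2_pos[of i n]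
    by (simp add: field_simps)
  finally show ?thesis .
qed

lemma LDf_pos: assumes "i \<ge> 1" shows "LDf (real i) (real n) > 0"
proof -
  have "real i \<ge> 1" using assms by simp
  then have "real n+real i+real i^2 > 0" by (simp add: add_nonneg_pos)
  then show ?thesis unfolding LDf_def by simp
qed
lemma LNf_pos: assumes "i \<ge> 1" shows "LNf (real i) (real n) > 0"
proof -
  have i1: "real i \<ge> 1" using assms by simp
  have "0 \<le> real i ^2" "0 \<le> real n" by simp_all
  then have s: "real n+real i+real i^2 \<ge> 1" using i1 by linarith
  have h: "4*(real n+real i+1) \<le> 4*(real n+real i+1)*(real n+real i+real i^2)"
    using mult_left_mono[OF s, of "4*(real n+real i+1)"] by simp
  have g: "0 < X - (real n + real i)" if "4*(real n+real i+1) \<le> X" for X :: real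
    using that i1 \<open>0 \<le> real n\<close> by (simp add: algebra_simps)
  show ?thesis unfolding LNf_def by (rule g[OF h])
qed

lemma ind_ineq: fixes i n :: nat assumes "i \<ge> 1"
  shows "LNf i (n+1) / LDf i (n+1) \<le> pp i n / cc2 i n - (cc0 i n / cc2 i n) / (LNf i n / LDf i n)"
proof -
  have ri: "real (i-1) + 1 = real i" using assms by simp
  have e0: "0 \<le> pp i n * LNf i n * LDf i (real n+1) - cc0 i n * LDf i n * LDf i (real n+1) - LNf i (real n+1) * cc2 i n * LNf i n"
    using ind_nonneg[of "i-1" n] unfolding Let_def ind_id[of "real (i-1)" "real n", unfolded ri, symmetric] .
  have e: "pp i n * LNf i n * LDf i (n+1) - cc0 i n * LDf i n * LDf i (n+1) - LNf i (n+1) * cc2 i n * LNf i n \<ge> 0"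
    using e0 by (simp only: of_nat_add of_nat_1)
  have p: "cc2 i n > 0" "LNf i n > 0" "LDf i n > 0" "LDf i (n+1) > 0"
    using cc2_pos[of i n] LNf_pos[OF assms, of n] LDf_pos[OF assms, of n] LDf_pos[OF assms, of "n+1"] by simp_all
  have "pp i n / cc2 i n - (cc0 i n / cc2 i n) / (LNf i n / LDf i n) - LNf i (n+1) / LDf i (n+1)
     = (pp i n * LNf i n * LDf i (n+1) - cc0 i n * LDf i n * LDf i (n+1) - LNf i (n+1) * cc2 i n * LNf i n)
       / (cc2 i n * LNf i n * LDf i (n+1))"
    using p by (simp add: field_simps)
  also have "\<dots> \<ge> 0" using e p by simp
  finally show ?thesis by simp
qed

lemma rr_lb: fixes i n :: nat assumes "i \<ge> 1" shows "LNf i n / LDf i n \<le> rr i n"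
proof (induction n)
  case 0
  have a1: "aa i 1 = W i 0 0 * (al i 0 0 + be i 0 0)"
  proof -
    have "aa i 1 = W i (Suc 0) 0 + W i 0 (Suc 0)" unfolding aa_def by (simp add: sum.atMost_Suc)
    then show ?thesis unfolding W_Suc_j W_Suc_l by (simp add: algebra_simps)
  qed
  have a0: "aa i 0 = W i 0 0" unfolding aa_def by simp
  have r0: "rr i 0 = al i 0 0 + be i 0 0" unfolding rr_def a0 using a1 W_pos[of i 0 0] by simp
  have i1: "real i \<ge> 1" using assms by simp
  have "0 \<le> real i^2" by simp
  then have nz: "real i + 1 \<noteq> 0" "real i + real i^2 \<noteq> 0" using i1 by linarith+
  have "al i 0 0 + be i 0 0 = LNf i 0 / LDf i 0" unfolding al_def be_def LNf_def LDf_def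
    using nz by (simp add: divide_simps) algebra
  then have "rr i 0 = LNf i 0 / LDf i 0" using r0 by simp
  then show ?case by simp
next
  case (Suc n)
  have q: "cc0 i n / cc2 i n \<ge> 0" unfolding cc0_def using cc2_pos[of i n] by simp
  have "(cc0 i n / cc2 i n) / rr i n \<le> (cc0 i n / cc2 i n) / (LNf i n / LDf i n)"
    using Suc q LNf_pos[OF assms, of n] LDf_pos[OF assms, of n] rr_pos[of i n] by (intro divide_left_mono) auto
  then have "pp i n / cc2 i n - (cc0 i n / cc2 i n) / (LNf i n / LDf i n) \<le> rr i (n+1)"
    unfolding rr_rec by simp
  then show ?case using ind_ineq[OF assms, of n] by simp
qed

lemma key_abs:
  fixes p q c p' q' c' LD x y z :: real
  assumes c: "c > 0" "c' > 0" "LD > 0" and x: "x > 0" and y: "y > 0"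
    and yd: "y = p/c - (q/c)/x" and zd: "z = p'/c' - (q'/c')/y"
    and HK: "0 < (LD*x)^4*(p'*p - q'*c)*c^2 - (LD*x)^3*LD*p'*q*c^2 - (p*(LD*x) - q*LD)^3*c'*LD"
  shows "y^2 < x*z"
proof -
  have h2: "p*x = c*x*y + q" using yd c x by (simp add: field_simps)
  have HKe: "(LD*x)^4*(p'*p - q'*c)*c^2 - (LD*x)^3*LD*p'*q*c^2 - (p*(LD*x) - q*LD)^3*c'*LD
      = (LD^4*x^3*c^3)*(p'*x*y - q'*x - c'*y^3)"
    using h2 by algebra
  have pos: "LD^4*x^3*c^3 > 0" using c x by simp
  have k: "0 < p'*x*y - q'*x - c'*y^3" using HK pos unfolding HKe by (simp add: zero_less_mult_iff)
  have zz: "x*z - y^2 = (p'*x*y - q'*x - c'*y^3)/(c'*y)" unfolding zd using c y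
    by (simp add: field_simps power2_eq_square power3_eq_cube)
  have "0 < x*z - y^2" unfolding zz using k c y by simp
  then show ?thesis by simp
qed

lemma rr_lc: fixes i n :: nat assumes "i \<ge> 1" shows "rr i (n+1)^2 < rr i n * rr i (n+2)"
proof -
  have ri: "real (i-1) + 1 = real i" using assms by simp
  have e2: "n+1+1 = n+2" by simp
  note yd = rr_rec[of i n]
  note zd = rr_rec[of i "n+1", unfolded e2 of_nat_add of_nat_1]
  define t where "t = LDf i n * rr i n - LNf i n"
  have LDp: "LDf i n > 0" using LDf_pos[OF assms] by simp
  have t0: "t \<ge> 0" using rr_lb[OF assms, of n] LDp unfolding t_def by (simp add: field_simps)
  have X: "LNf i n + t = LDf i n * rr i n" unfolding t_def by simp
  have H: "0 < 64*(real i+real n+2) * (let a = real (i-1); n = real n in 4589405568 + a * (56170838016 + a * (323239847616 + a * (1163239353408 + a * (2937075902616 + a * (5533211040144 + a * (8074385656008 + a * (9351454730960 + a * (8736546238736 + a * (6654903977840 + a * (4160386171624 + a * (2141321206096 + a * (907425437992 + a * (315648097440 + a * (89548177152 + a * (20500507584 + a * (3726594560 + a * (525006848 + a * (55219712 + a * (4077568 + a * (188416 + a * (4096))))))))))))))))))))) + n * (31604946336 + a * (364485274848 + a * (1971379637352 + a * (6650026959568 + a * (15693224829712 + a * (27543640644560 + a * (37311180092152 + a * (39950415814664 + a * (34344269195352 + a * (23941329812416 + a * (13608662819808 + a * (6319096234360 + a * (2392980607288 + a * (735067143808 + a * (181375424576 + a * (35397833344 + a * (5336213504 + a * (598860288 +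 a * (47068672 + a * (2310144 + a * (53248)))))))))))))))))))) + n * (101956361040 + a * (1103737848336 + a * (5587530795828 + a * (17587213798300 + a * (38597613219102 + a * (62769192448892 + a * (78460010349610 + a * (77155858108756 + a * (60585231478094 + a * (38328983045464 + a * (19620272416422 + a * (8127464173772 + a * (2713521439664 + a * (723878170832 + a * (152056753152 + a * (24579077376 + a * (2948284928 + a * (247002880 + a * (12892160 + a * (315392))))))))))))))))))) + n * (204537117600 + a * (2069738184672 + a * (9760789954338 + a * (28518177185288 + a * (57871675038630 + a * (86652506929724 + a * (99249025129050 + a * (88939433902352 + a * (63231677278414 + a * (35940918748284 + a * (16374991765336 + a * (5967060828120 + a * (1726474088288 + a * (391298432768 + a * (67950640832 + a * (8724600192 + a * (780006144 + a * (43333120 + a * (1125888)))))))))))))))))) + n * (285623025120 + a * (2688829569792 + a * (11749247449299 + a * (31673306167155 + a * (59035579328972 + a * (80784532049908 + a * (84083150345395 + a * (68023676047323 + a * (43321738545064 + a * (21851144338150 + a * (8731714788726 + a * (2749313726568 + a * (673904094280 + a * (125920785360 + a * (17323689024 + a * (1653769792 + a * (97819648 + a * (2699520))))))))))))))))) + n * (294416763786 + a * (2564570648370 + a * (10318976799411 + a * (25486451406586 + a * (43288426592804 + a * (53657209655742 + a * (50244526814073 + a * (36279023323700 + a * (20424860484956 + a * (9000312486706 + a * (3095259235654 + a * (822349115504 + a * (165521091816 + a * (24407013504 + a * (2487124608 + a * (156516352 + a * (4583168)))))))))))))))) + n * (231747988965 + a * (1856350711191 + a * (6827944477644 + a * (15322052356457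 + a * (23490313019690 + a * (26090964130802 + a * (21709966421776 + a * (13791968573858 + a * (6749486698912 + a * (2546122932699 + a * (734771735210 + a * (159388827860 + a * (25170291744 + a * (2732993552 + a * (182519808 + a * (5653760))))))))))))))) + n * (142107582101 + a * (1039272902774 + a * (3464101725895 + a * (6991396746258 + a * (9562344074086 + a * (9389779250780 + a * (6834907700198 + a * (3750504994804 + a * (1560414576871 + a * (490259015994 + a * (114587338678 + a * (19333931648 + a * (2227671696 + a * (156998656 + a * (5109504)))))))))))))) + n * (68610320294 + a * (454246989480 + a * (1357638302448 + a * (2433485657002 + a * (2925789757381 + a * (2496352771536 + a * (1557370252771 + a * (720134962701 + a * (247059848156 + a * (62162648905 + a * (11158055552 + a * (1354002784 + a * (99627008 + a * (3359488))))))))))))) + n * (26170344004 + a * (155274060068 + a * (410646930214 + a * (643243944416 + a * (666850517078 + a * (483100163266 + a * (251167744011 + a * (94522338712 + a * (25569916239 + a * (4850061568 + a * (612161824 + a * (46133248 + a * (1568000)))))))))))) + n * (7860757025 + a * (41282132297 + a * (94964789185 + a * (127233667090 + a * (110780945995 + a * (65970564814 + a * (27444007680 + a * (7973464536 + a * (1583001888 + a * (203829200 + a * (15220736 + a * (493312))))))))))) + n * (1839900781 + a * (8421047300 + a * (16462863758 + a * (18305852608 + a * (12885405358 + a * (6006714624 + a * (1874378584 + a * (384399488 + a * (49006160 + a * (3423744 + a * (93952)))))))))) + n * (329001092 + a * (1286302616 + a * (2066492100 + a * (1822218896 + a * (976154552 + a * (328034528 + a * (68192128 + a * (8196736 + a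 * (480256 + a * (8192))))))))) + n * (43450640 + a * (141256224 + a * (176779024 + a * (114468736 + a * (41782688 + a * (8541952 + a * (882560 + a * (32768))))))) + n * (3997248 + a * (10398592 + a * (9174976 + a * (3725056 + a * (706432 + a * (49152))))) + n * (228864 + a * (449024 + a * (216320 + a * (32768))) + n * (6144 + a * (8192))))))))))))))))) + t * (2213513568 + a * (22009335984 + a * (101929357944 + a * (292147986276 + a * (580758614964 + a * (850373979216 + a * (950610875536 + a * (829643878696 + a * (573162083936 + a * (315850962036 + a * (139201330276 + a * (48962959184 + a * (13648991920 + a * (2976179264 + a * (496848640 + a * (61341696 + a * (5282048 + a * (283648 + a * (7168)))))))))))))))))) + n * (14000320368 + a * (130152696192 + a * (562183168764 + a * (1498754473236 + a * (2762692412196 + a * (3737854510352 + a * (3845190176712 + a * (3073559008436 + a * (1933879756568 + a * (964159973072 + a * (381386292536 + a * (119248342240 + a * (29201507360 + a * (5511590848 + a * (781666048 + a * (80010496 + a * (5527552 + a * (227328 + a * (4096)))))))))))))))))) + n * (41230841616 + a * (356503583016 + a * (1428243378606 + a * (3520553255961 + a * (5978992058341 + a * (7422690485052 + a * (6973336171136 + a * (5062073227061 + a * (2873491458237 + a * (1282288247722 + a * (449679929460 + a * (123205026024 + a * (26061575568 + a * (4174740064 + a * (491751744 + a * (40747904 + a * (2217728 + a * (70656 + a * (1024)))))))))))))))))) + n * (74994051384 + a * (599501367048 + a * (2213311470021 + a * (5009408073132 + a * (7779293963872 + a * (8788857437262 + a * (7472030762845 + a * (4876105742704 + a * (2468604820330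 + a * (973081940606 + a * (297912341904 + a * (70234973304 + a * (12557263808 + a * (1662984480 + a * (157605760 + a * (10158208 + a * (408576 + a * (8192))))))))))))))))) + n * (94208885406 + a * (691418456187 + a * (2334653524131 + a * (4812056411448 + a * (6771959037490 + a * (6893733555136 + a * (5245424740712 + a * (3039017644326 + a * (1352653965990 + a * (463184748512 + a * (121367769660 + a * (24037019632 + a * (3526071264 + a * (371709632 + a * (26911040 + a * (1234944 + a * (28672)))))))))))))))) + n * (86571106635 + a * (578516229186 + a * (1770554560806 + a * (3290694303042 + a * (4151036266866 + a * (3761419010442 + a * (2526513533364 + a * (1279221065494 + a * (491464778004 + a * (143031441308 + a * (31232880896 + a * (5025399024 + a * (578993344 + a * (45691648 + a * (2279424 + a * (57344))))))))))))))) + n * (60108294234 + a * (362111938302 + a * (993545912382 + a * (1644985941226 + a * (1834934997190 + a * (1457482609745 + a * (849120412023 + a * (368077257053 + a * (119107112339 + a * (28590530924 + a * (5008930740 + a * (622642112 + a * (52445504 + a * (2752512 + a * (71680)))))))))))))) + n * (32104748796 + a * (172232819688 + a * (417915258758 + a * (607033273398 + a * (588463714781 + a * (401617464938 + a * (198250785065 + a * (71544513810 + a * (18840128948 + a * (3570022600 + a * (473191360 + a * (41751424 + a * (2236416 + a * (57344))))))))))))) + n * (13296635556 + a * (62544721303 + a * (131886696255 + a * (164748912341 + a * (135634197479 + a * (77407867893 + a * (31335162943 + a * (9040852644 + a * (1839212172 + a * (256403136 + a * (23190848 + a * (1222656 + a * (28672)))))))))))) + n * (4269073581 + a * (17253491542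 + a * (30891117447 + a * (32299484724 + a * (21868458669 + a * (10036249160 + a * (3172257404 + a * (686409920 + a * (98767552 + a * (8875520 + a * (436224 + a * (8192))))))))))) + n * (1053513072 + a * (3558305992 + a * (5236525958 + a * (4407637400 + a * (2338831024 + a * (811674520 + a * (184515000 + a * (26635456 + a * (2256320 + a * (93184 + a * (1024)))))))))) + n * (196161348 + a * (531879320 + a * (612801720 + a * (390547168 + a * (149874440 + a * (35176320 + a * (4861120 + a * (350976 + a * (9216)))))))) + n * (26663220 + a * (54453488 + a * (45288288 + a * (19558784 + a * (4611072 + a * (557696 + a * (26496)))))) + n * (2496144 + a * (3416576 + a * (1741952 + a * (389632 + a * (32896)))) + n * (143808 + a * (99072 + a * (18432)) + n * (3840))))))))))))))) + t * (401957856 + a * (3098485584 + a * (10965531240 + a * (23639269932 + a * (34724602152 + a * (36824691996 + a * (29131121310 + a * (17508611364 + a * (8062675158 + a * (2845512264 + a * (763681968 + a * (153161712 + a * (22244448 + a * (2212608 + a * (135168 + a * (3840))))))))))))))) + n * (2320713360 + a * (16593617424 + a * (54336029388 + a * (108055592208 + a * (145887913602 + a * (141571138026 + a * (101937106836 + a * (55406433606 + a * (22892555214 + a * (7178833680 + a * (1691202528 + a * (293153568 + a * (36065376 + a * (2958336 + a * (143616 + a * (3072))))))))))))))) + n * (6197397840 + a * (40833372480 + a * (122859951138 + a * (223719437493 + a * (275397287253 + a * (242403703560 + a * (157309780104 + a * (76461097632 + a * (27977454264 + a * (7675202280 + a * (1557244512 + a * (227764464 + a * (22998912 + a * (1489152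 + a * (53760 + a * (768))))))))))))))) + n * (10145656536 + a * (61127577396 + a * (167629293585 + a * (277067467410 + a * (308027981868 + a * (243335812164 + a * (140634033534 + a * (60287103768 + a * (19216896276 + a * (4519673184 + a * (769516656 + a * (91648128 + a * (7196352 + a * (333312 + a * (6912)))))))))))))) + n * (11374514790 + a * (62101687335 + a * (153725085369 + a * (228239088447 + a * (226544121528 + a * (158562504477 + a * (80410179978 + a * (29872948614 + a * (8118856032 + a * (1592411520 + a * (219001440 + a * (20029536 + a * (1098240 + a * (27648))))))))))))) + n * (9237694341 + a * (45208527210 + a * (99846725013 + a * (131482676724 + a * (114878439381 + a * (70097343936 + a * (30605645238 + a * (9628816656 + a * (2166314400 + a * (340264128 + a * (35530464 + a * (2230272 + a * (64512)))))))))))) + n * (5604112734 + a * (24258173457 + a * (47120489763 + a * (54169209873 + a * (40920686433 + a * (21318212841 + a * (7814092452 + a * (2016249456 + a * (359517216 + a * (42350832 + a * (2987520 + a * (96768))))))))))) + n * (2579724903 + a * (9712731732 + a * (16294448829 + a * (16023324486 + a * (10222383363 + a * (4420369776 + a * (1312773120 + a * (264834912 + a * (34860048 + a * (2721792 + a * (96768)))))))))) + n * (905426169 + a * (2901307026 + a * (4104891474 + a * (3360291171 + a * (1752785952 + a * (604148424 + a * (137696256 + a * (20051184 + a * (1700352 + a * (64512))))))))) + n * (241108170 + a * (638466618 + a * (737368101 + a * (483559584 + a * (196596216 + a * (50667360 + a * (8064912 + a * (721920 + a * (27648)))))))) + n * (47951811 + a * (100590402 + a * (90411348 + a * (44781720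 + a * (13108416 + a * (2244096 + a * (202752 + a * (6912))))))) + n * (6906906 + a * (10742400 + a * (6958104 + a * (2345856 + a * (420096 + a * (35328 + a * (768)))))) + n * (681192 + a * (696864 + a * (280896 + a * (50304 + a * (3072)))) + n * (41184 + a * (20736 + a * (3456)) + n * (1152)))))))))))))) + t * (32281824 + a * (178107456 + a * (441243096 + a * (649566516 + a * (633165608 + a * (430618451 + a * (209535215 + a * (73497492 + a * (18445548 + a * (3231984 + a * (375952 + a * (26176 + a * (832)))))))))))) + n * (168263104 + a * (854032144 + a * (1940300996 + a * (2607819816 + a * (2307272929 + a * (1413758020 + a * (613965828 + a * (189890896 + a * (41359088 + a * (6156224 + a * (590592 + a * (32512 + a * (768)))))))))))) + n * (402186928 + a * (1862701656 + a * (3847441202 + a * (4676091339 + a * (3714322777 + a * (2024196680 + a * (772324632 + a * (206477806 + a * (38015256 + a * (4631928 + a * (346160 + a * (13632 + a * (192)))))))))))) + n * (583585088 + a * (2442774612 + a * (4540024151 + a * (4932290860 + a * (3470381852 + a * (1654940352 + a * (543504542 + a * (122233638 + a * (18305176 + a * (1719176 + a * (89664 + a * (1920))))))))))) + n * (573436478 + a * (2144569426 + a * (3541775084 + a * (3390816125 + a * (2077770723 + a * (848843633 + a * (233330567 + a * (42431436 + a * (4858884 + a * (314176 + a * (8640)))))))))) + n * (402863160 + a * (1327408814 + a * (1918033879 + a * (1589338968 + a * (829618053 + a * (282092232 + a * (62318052 + a * (8602656 + a * (671552 + a * (22528))))))))) + n * (208151550 + a * (593779335 + a * (735999871 + a *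 (515595094 + a * (222473522 + a * (60381872 + a * (10049872 + a * (937216 + a * (37504)))))))) + n * (80070601 + a * (193348930 + a * (200304330 + a * (114882314 + a * (39231456 + a * (7953976 + a * (885760 + a * (41856))))))) + n * (22927828 + a * (45471523 + a * (37975643 + a * (17018292 + a * (4293172 + a * (575808 + a * (32064)))))) + n * (4825835 + a * (7530040 + a * (4803868 + a * (1560896 + a * (256320 + a * (16896))))) + n * (725556 + a * (833208 + a * (371048 + a * (75968 + a * (5952)))) + n * (73768 + a * (55296 + a * (14272 + a * (1280))) + n * (4544 + a * (1664 + a * (128)) + n * (128))))))))))))) + t * (956448 + a * (3211632 + a * (4707096 + a * (3944740 + a * (2079040 + a * (713348 + a * (159184 + a * (22304 + a * (1792 + a * (64))))))))) + n * (4412880 + a * (13530048 + a * (17945108 + a * (13459164 + a * (6259772 + a * (1860748 + a * (350840 + a * (40096 + a * (2496 + a * (64))))))))) + n * (9202896 + a * (25510216 + a * (30244242 + a * (19986245 + a * (8036244 + a * (2012181 + a * (307740 + a * (26888 + a * (1152 + a * (16))))))))) + n * (11448648 + a * (28341928 + a * (29570715 + a * (16868034 + a * (5701291 + a * (1154414 + a * (134250 + a * (7968 + a * (176)))))))) + n * (9437994 + a * (20543431 + a * (18480800 + a * (8848313 + a * (2413622 + a * (370523 + a * (29120 + a * (880))))))) + n * (5412537 + a * (10149230 + a * (7654803 + a * (2953564 + a * (609641 + a * (63072 + a * (2512)))))) + n * (2202936 + a * (3460334 + a * (2100984 + a * (612566 + a * (85056 + a * (4448))))) + n * (636198 + a *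 (803798 + a * (368396 + a * (72160 + a * (5056)))) + n * (127734 + a * (121719 + a * (37440 + a * (3696))) + n * (16977 + a * (10848 + a * (1680)) + n * (1344 + a * (432) + n * (48))))))))))))))))"
    by (rule mult_pos_pos[OF _ H3_pos[OF t0]]) simp
  note HKeq = HK_id[of "real (i-1)" "real n" t, unfolded ri]
  have HK0: "0 < (LNf i n + t)^4*(pp i (real n+1) * pp i n - cc0 i (real n+1) * cc2 i n)*cc2 i n^2
    - (LNf i n + t)^3*LDf i n*pp i (real n+1)*cc0 i n*cc2 i n^2
    - (pp i n*(LNf i n + t) - cc0 i n*LDf i n)^3*cc2 i (real n+1)*LDf i n"
    unfolding HKeq using H unfolding Let_def by (simp only: add.assoc)
  have HK: "0 < (LDf i n * rr i n)^4*(pp i (real n+1) * pp i n - cc0 i (real n+1) * cc2 i n)*cc2 i n^2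
    - (LDf i n * rr i n)^3*LDf i n*pp i (real n+1)*cc0 i n*cc2 i n^2
    - (pp i n*(LDf i n * rr i n) - cc0 i n*LDf i n)^3*cc2 i (real n+1)*LDf i n"
    using HK0 unfolding X .
  show ?thesis
    apply (rule key_abs[of "cc2 i n" "cc2 i (real n+1)" "LDf i n" "rr i n" "rr i (n+1)" "pp i n" "cc0 i n" "rr i (n+2)" "pp i (real n+1)" "cc0 i (real n+1)"])
    using cc2_pos[of i n] cc2_pos[of i "n+1", unfolded of_nat_add of_nat_1] LDp rr_pos[of i n] rr_pos[of i "n+1"] yd zd HK
    by simp_all
qed

lemma seq_lemma:
  fixes u :: "nat \<Rightarrow> real"
  assumes lc: "\<And>j. u (j+1) - u (j+2) < u j - u (j+1)" and n1: "n \<ge> 1"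
  shows "real n * (real n + 1) * (u n - u (n+1)) < 2 * (\<Sum>j<n. u j - u n)"
  using n1
proof (induction n rule: nat_induct_at_least)
  case base
  then show ?case using lc[of 0] by simp
next
  case (Suc n)
  have S: "(\<Sum>j<Suc n. u j - u (Suc n)) = (\<Sum>j<n. u j - u n) + (real n + 1) * (u n - u (n+1))"
    by (simp add: sum_subtractf algebra_simps)
  have A: "(real n + 1) * (real n + 2) * (u (n+1) - u (n+2)) < (real n + 1) * (real n + 2) * (u n - u (n+1))"
    using lc[of n] by (intro mult_strict_left_mono) auto
  have B: "(real n + 1) * (real n + 2) * (u n - u (n+1)) = real n * (real n + 1) * (u n - u (n+1)) + 2 * ((real n + 1) * (u n - u (n+1)))"
    by (simp add: algebra_simps)
  have "real (Suc n) * (real (Suc n) + 1) * (u (Suc n) - u (Suc n + 1)) = (real n + 1) * (real n + 2) * (u (n+1) - u (n+2))"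
    by (simp add: algebra_simps)
  also have "\<dots> < (real n + 1) * (real n + 2) * (u n - u (n+1))" by (rule A)
  also have "\<dots> = real n * (real n + 1) * (u n - u (n+1)) + 2 * ((real n + 1) * (u n - u (n+1)))" by (rule B)
  also have "\<dots> < 2 * (\<Sum>j<n. u j - u n) + 2 * ((real n + 1) * (u n - u (n+1)))" using Suc.IH by (rule add_strict_right_mono)
  also have "\<dots> = 2 * ((\<Sum>j<n. u j - u n) + (real n + 1) * (u n - u (n+1)))" by (simp add: algebra_simps)
  finally show ?case unfolding S .
qed

lemma fin_abs:
  fixes F U V f0 N :: real
  assumes N: "N \<ge> 1" and f0: "f0 \<ge> 0" and E: "N * (N + 1) * (U - V) < 2 * (F - f0 - N * U)"
  shows "(F+U)/(N+1) - F/N < (F+U+V)/(N+2) - (F+U)/(N+1)"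
proof -
  have eq: "(F+U)/(N+1) - F/N - ((F+U+V)/(N+2) - (F+U)/(N+1)) = - (2*F - 2*N*U - N*(N+1)*(U-V)) / (N*(N+1)*(N+2))"
  proof -
    have nz: "N \<noteq> 0" "N + 1 \<noteq> 0" "N + 2 \<noteq> 0" using N by simp_all
    show ?thesis using nz by (simp add: divide_simps) algebra
  qed
  have "0 < 2*F - 2*N*U - N*(N+1)*(U-V)" using E f0 by (simp add: algebra_simps)
  moreover have "0 < N*(N+1)*(N+2)" using N by simp
  ultimately have "- (2*F - 2*N*U - N*(N+1)*(U-V)) / (N*(N+1)*(N+2)) < 0" by (simp add: divide_less_0_iff)
  then show ?thesis using eq by simp
qed

theorem theorem5p2:
  fixes i n :: nat
  assumes "i \<ge> 1" and "n \<ge> 1"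
  shows "root (n + 1) (boros_moll i (i + n + 1)) / root n (boros_moll i (i + n))
       < root (n + 2) (boros_moll i (i + n + 2)) / root (n + 1) (boros_moll i (i + n + 1))"
proof -
  have b: "boros_moll i (i+n+k) = aa i (n+k)" for k by (metis bm_aa add.assoc)
  have b0: "boros_moll i (i+n) = aa i n" by (rule bm_aa)
  define f where "f k = ln (aa i k)" for k
  define u where "u k = ln (rr i k)" for k
  have uf: "u k = f (k+1) - f k" for k unfolding u_def f_def rr_def using aa_pos[of i k] aa_pos[of i "k+1"]
    by (simp add: ln_div)
  have lc: "u (j+1) - u (j+2) < u j - u (j+1)" for j
  proof -
    have "ln (rr i (j+1)^2) < ln (rr i j * rr i (j+2))"
      using rr_lc[OF assms(1), of j] rr_pos[of i j] rr_pos[of i "j+1"] rr_pos[of i "j+2"]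
      by (subst ln_less_cancel_iff) (auto intro: mult_pos_pos)
    then have "2 * u (j+1) < u j + u (j+2)" unfolding u_def using rr_pos[of i j] rr_pos[of i "j+1"] rr_pos[of i "j+2"]
      by (simp add: ln_mult ln_realpow)
    then show ?thesis by simp
  qed
  have sl: "real n * (real n + 1) * (u n - u (n+1)) < 2 * (\<Sum>j<n. u j - u n)"
    by (rule seq_lemma[OF lc assms(2)])
  have tel: "(\<Sum>j<n. u j) = f n - f 0" unfolding uf by (simp add: sum_lessThan_telescope)
  have su: "(\<Sum>j<n. u j - u n) = f n - f 0 - real n * u n"
    by (simp add: sum_subtractf tel)
  have f0: "f 0 \<ge> 0" unfolding f_def using aa0_ge1[of i] by simp
  have N: "real n \<ge> 1" using assms(2) by simp
  have key: "(f n + u n)/(real n+1) - f n/real n < (f n + u n + u (n+1))/(real n+2) - (f n + u n)/(real n+1)"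
    by (rule fin_abs[OF N f0]) (use sl su in simp)
  have f1: "f (n+1) = f n + u n" "f (n+2) = f n + u n + u (n+1)" using uf[of n] uf[of "n+1"] by simp_all
  have lr: "ln (root m (aa i k)) = f k / real m" if "m > 0" for m k
    unfolding f_def using that aa_pos[of i k] by (simp add: ln_root)
  have pos: "root m (aa i k) > 0" if "m > 0" for m k using that aa_pos[of i k] by simp
  have n0: "n > 0" using assms(2) by simp
  have l1: "ln (root (n+1) (aa i (n+1))) = (f n + u n)/(real n+1)" using lr[of "n+1" "n+1"] f1 by simp
  have l2: "ln (root n (aa i n)) = f n / real n" using lr[of n n] n0 by simp
  have l3: "ln (root (n+2) (aa i (n+2))) = (f n + u n + u (n+1))/(real n+2)" using lr[of "n+2" "n+2"] f1 by simp
  have p1: "root (n+1) (aa i (n+1)) > 0" "root n (aa i n) > 0" "root (n+2) (aa i (n+2)) > 0"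
    using pos[of "n+1" "n+1"] pos[of n n] pos[of "n+2" "n+2"] n0 by simp_all
  have LL: "ln (root (n+1) (aa i (n+1)) / root n (aa i n)) = (f n + u n)/(real n+1) - f n / real n"
    using p1 l1 l2 by (simp add: ln_div)
  have RR: "ln (root (n+2) (aa i (n+2)) / root (n+1) (aa i (n+1))) = (f n + u n + u (n+1))/(real n+2) - (f n + u n)/(real n+1)"
    using p1 l1 l3 by (simp add: ln_div)
  have "ln (root (n+1) (aa i (n+1)) / root n (aa i n)) < ln (root (n+2) (aa i (n+2)) / root (n+1) (aa i (n+1)))"
    unfolding LL RR by (rule key)
  then have "root (n+1) (aa i (n+1)) / root n (aa i n) < root (n+2) (aa i (n+2)) / root (n+1) (aa i (n+1))"
    using p1 by (subst (asm) ln_less_cancel_iff) auto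
  then show ?thesis unfolding b b0 .
qed


end
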